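(* Let $0\le k\le l$ be integers. For every $m\ge 1$, $$d_m(g_{l,k})=\begin{cases}\lfloor\tfrac{l+1}{m}\rfloor-1-\lfloor\tfrac{l-k}{m}\rfloor & \text{for } 1\le m\le k,\\ 0 & \text{for } m>k,\end{cases}$$ and, up to a unit, $g_{l,k}=\prod_{m\ge1}\Phi_m^{d_m(g_{l,k})}$.
   Context: In $\mathbb{Z}[q,q^{-1}]$ set $\{i\}_q=q^i-1$, $\{i\}_{q,n}=\{i\}_q\{i-1\}_q\cdots\{i-n+1\}_q$ (equal to $1$ for $n=0$), $\{n\}_q!=\{n\}_{q,n}$. For $0\le i\le k\le l$ set $h_{l,k,i}=\{l-i\}_{q,k-i}\,\{i\}_q!$, and let $g_{l,k}=\mathrm{GCD}(h_{l,k,0},\dots,h_{l,k,k})$, a greatest common divisor in the UFD $\mathbb{Z}[q,q^{-1}]$ (defined up to units $\pm q^j$). For nonzero $a\in\mathbb{Z}[q,q^{-1}]$ and $m\ge1$, $d_m(a)$ is the largest integer $i$ with $a\in\Phi_m^i\mathbb{Z}[q,q^{-1}]$, where $\Phi_m$ is the $m$th cyclotomic polynomial. $\lfloor r\rfloor$ is the floor of $r$. *)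

theory Defs
  imports Complex_Main "HOL-Computational_Algebra.Computational_Algebra"
begin

text \<open>Elements of Z[q,q^-1] are represented by integer polynomials in q; every Laurent
  polynomial is a unit q^(-j) times such a polynomial, and all objects here are
  polynomials anyway.\<close>

definition qb :: "nat \<Rightarrow> int poly" where
  "qb i = monom 1 i - 1"

definition qfall :: "nat \<Rightarrow> nat \<Rightarrow> int poly" where
  "qfall i n = (\<Prod>j<n. qb (i - j))"

definition qfact :: "nat \<Rightarrow> int poly" where
  "qfact n = qfall n n"

definition hlki :: "nat \<Rightarrow> nat \<Rightarrow> nat \<Rightarrow> int poly" where
  "hlki l k i = qfall (l - i) (k - i) * qfact i"

text \<open>Divisibility in Z[q,q^-1], expressed on polynomial representatives.\<close>
definition ldvd :: "int poly \<Rightarrow> int poly \<Rightarrow> bool" where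
  "ldvd a b \<longleftrightarrow> (\<exists>j::nat. a dvd monom 1 j * b)"

definition is_lgcd :: "int poly \<Rightarrow> int poly set \<Rightarrow> bool" where
  "is_lgcd g H \<longleftrightarrow> (\<forall>h\<in>H. ldvd g h) \<and> (\<forall>d. (\<forall>h\<in>H. ldvd d h) \<longrightarrow> ldvd d g)"

definition cyclo :: "nat \<Rightarrow> int poly" where
  "cyclo m = (THE p. map_poly of_int p =
      (\<Prod>j\<in>{j. j < m \<and> coprime j m}. [:- cis (2 * pi * real j / real m), 1:]))"

definition dm :: "nat \<Rightarrow> int poly \<Rightarrow> nat" where
  "dm m a = (GREATEST i. ldvd (cyclo m ^ i) a)"

end

theory Submission
  imports Defs
begin


abbreviation phi :: "int poly \<Rightarrow> complex poly" where "phi \<equiv> map_poly of_int"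

lemma phi_add: "phi (p + q) = phi p + phi q"
  by (intro poly_eqI) (simp add: coeff_map_poly)
lemma phi_diff: "phi (p - q) = phi p - phi q"
  by (intro poly_eqI) (simp add: coeff_map_poly)
lemma phi_mult: "phi (p * q) = phi p * phi q"
  by (induct p) (simp_all add: map_poly_pCons phi_add map_poly_smult)
lemma phi_1[simp]: "phi 1 = 1" by simp
lemma phi_prod: "phi (\<Prod>i\<in>A. f i) = (\<Prod>i\<in>A. phi (f i))"
  by (induct A rule: infinite_finite_induct) (simp_all add: phi_mult)
lemma phi_power: "phi (p ^ n) = phi p ^ n"
  by (induct n) (simp_all add: phi_mult)
lemma phi_monom: "phi (monom c n) = monom (of_int c) n"
  by (simp add: map_poly_monom)
lemma phi_smult: "phi (smult c p) = smult (of_int c) (phi p)"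
  by (simp add: map_poly_smult)
lemma phi_inj: "phi p = phi q \<Longrightarrow> p = q"
  by (metis (no_types, lifting) coeff_map_poly of_int_0 of_int_eq_iff poly_eqI)
lemma phi_eq0[simp]: "phi p = 0 \<longleftrightarrow> p = 0"
  using phi_inj by fastforce
lemma degree_phi[simp]: "degree (phi p) = degree p"
  by (simp add: degree_map_poly)
lemma lead_phi[simp]: "lead_coeff (phi p) = of_int (lead_coeff p)"
  by (simp add: coeff_map_poly)
lemma poly_phi: "poly (phi p) (of_int x) = of_int (poly p x)"
  by (induct p) (simp_all add: map_poly_pCons)



definition prim :: "nat \<Rightarrow> complex set" where
  "prim m = {z. 0 < m \<and> z ^ m = 1 \<and> (\<forall>d. 0 < d \<longrightarrow> d < m \<longrightarrow> z ^ d \<noteq> 1)}"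

lemma prim_dvd_iff:
  assumes "z \<in> prim m" shows "z ^ t = 1 \<longleftrightarrow> m dvd t"
proof
  assume h: "z ^ t = 1"
  from assms have m: "0 < m" "z ^ m = 1" "\<And>d. 0 < d \<Longrightarrow> d < m \<Longrightarrow> z ^ d \<noteq> 1"
    by (auto simp: prim_def)
  have "t = m * (t div m) + t mod m" by simp
  then have "z ^ t = (z ^ m) ^ (t div m) * z ^ (t mod m)"
    by (metis power_add power_mult)
  then have "z ^ (t mod m) = 1" using h m by simp
  moreover have "t mod m < m" using m by simp
  ultimately have "t mod m = 0" using m(3) by (metis neq0_conv)
  then show "m dvd t" by auto
next
  assume "m dvd t"
  then obtain q where "t = m * q" by auto
  then show "z ^ t = 1" using assms by (simp add: prim_def power_mult)
qed

lemma prim_pos: "z \<in> prim m \<Longrightarrow> 0 < m" by (simp add: prim_def)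

lemma prim_one: "z \<in> prim m \<Longrightarrow> z ^ m = 1" by (simp add: prim_def)

lemma prim_unique: "z \<in> prim m \<Longrightarrow> z \<in> prim d \<Longrightarrow> m = d"
proof -
  assume a: "z \<in> prim m" "z \<in> prim d"
  have "m dvd d" using prim_dvd_iff[OF a(1)] prim_one[OF a(2)] by blast
  moreover have "d dvd m" using prim_dvd_iff[OF a(2)] prim_one[OF a(1)] by blast
  ultimately show ?thesis by (rule dvd_antisym)
qed

lemma prim_exists:
  assumes "0 < t" "z ^ t = (1::complex)" shows "\<exists>m. z \<in> prim m \<and> m dvd t"
proof -
  define m where "m = (LEAST d. 0 < d \<and> z ^ d = 1)"
  have m1: "0 < m \<and> z ^ m = 1" unfolding m_def by (rule LeastI[of _ t]) (use assms in auto)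
  have m2: "\<And>d. 0 < d \<Longrightarrow> d < m \<Longrightarrow> z ^ d \<noteq> 1" unfolding m_def using not_less_Least by blast
  have "z \<in> prim m" using m1 m2 by (simp add: prim_def)
  moreover then have "m dvd t" using prim_dvd_iff assms by blast
  ultimately show ?thesis by blast
qed

lemma prim_ne0: "z \<in> prim m \<Longrightarrow> z \<noteq> 0"
proof
  assume "z \<in> prim m" "z = 0"
  then have "(0::complex) ^ m = 1" "0 < m" using prim_one prim_pos by blast+
  then show False by (simp add: power_0_left)
qed

lemma finite_prim: "finite (prim m)"
proof (cases "m = 0")
  case True then show ?thesis by (simp add: prim_def)
next
  case False
  then have "prim m \<subseteq> {z. z ^ m = 1}" by (auto simp: prim_def)
  moreover have "finite {z::complex. z ^ m = 1}" using False by (intro finite_roots_unity) auto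
  ultimately show ?thesis by (rule finite_subset)
qed

lemma roots_unity_Union:
  assumes "0 < t"
  shows "{z::complex. z ^ t = 1} = (\<Union>d\<in>{d. d dvd t}. prim d)"
proof safe
  fix z :: complex assume "z ^ t = 1"
  then show "z \<in> (\<Union>d\<in>{d. d dvd t}. prim d)" using prim_exists[OF assms] by blast
next
  fix z d assume "d dvd t" "z \<in> prim d"
  then show "z ^ t = 1" using prim_dvd_iff by blast
qed


lemma omega_prim:
  assumes "0 < m" shows "cis (2 * pi / real m) \<in> prim m"
proof -
  let ?f = "\<lambda>k. cis (2 * pi * real k / real m)"
  have inj: "inj_on ?f {..<m}" using bij_betw_roots_unity[OF assms] by (simp add: bij_betw_def)
  have pw: "cis (2 * pi / real m) ^ d = ?f (d mod m)" for d
  proof -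
    have "cis (2 * pi / real m) ^ d = cis (2 * pi * real d / real m)" by (simp add: DeMoivre mult.commute)
    also have "real d = real (m * (d div m)) + real (d mod m)"
      by (metis of_nat_add div_mult_mod_eq mult.commute)
    also have "2 * pi * (real (m * (d div m)) + real (d mod m)) / real m
       = 2 * pi * real (d div m) + 2 * pi * real (d mod m) / real m"
      using assms by (simp add: field_simps)
    also have "cis (2 * pi * real (d div m) + 2 * pi * real (d mod m) / real m) = ?f (d mod m)"
      by (simp add: cis_mult[symmetric] DeMoivre[symmetric] cis_2pi)
    finally show ?thesis .
  qed
  have "cis (2 * pi / real m) ^ d = 1 \<longleftrightarrow> d mod m = 0" for d
  proof -
    have "?f 0 = 1" by simp
    then have "?f (d mod m) = 1 \<longleftrightarrow> d mod m = 0"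
      using inj assms by (metis inj_onD lessThan_iff mod_less_divisor neq0_conv)
    then show ?thesis using pw by simp
  qed
  then show ?thesis using assms by (auto simp: prim_def)
qed



lemma coprime_char:
  fixes j m :: nat assumes "0 < m"
  shows "(\<forall>d. 0 < d \<longrightarrow> d < m \<longrightarrow> \<not> m dvd j * d) \<longleftrightarrow> coprime j m"
proof
  assume h: "\<forall>d. 0 < d \<longrightarrow> d < m \<longrightarrow> \<not> m dvd j * d"
  show "coprime j m"
  proof (rule ccontr)
    assume nc: "\<not> coprime j m"
    define g where "g = gcd j m"
    have g1: "g \<noteq> 1" using nc by (simp add: g_def coprime_iff_gcd_eq_1)
    have gpos: "0 < g" using assms by (simp add: g_def)
    have gm: "g dvd m" "g dvd j" by (simp_all add: g_def)
    define d where "d = m div g"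
    have md: "m = g * d" using gm by (simp add: d_def)
    have "0 < d" using assms md by (cases d) auto
    moreover have "d < m" using g1 gpos assms gm
      by (simp add: d_def)
    moreover have "j * d = (j div g) * m"
      using gm by (simp add: d_def) (metis div_mult_swap dvd_div_mult mult.commute)
    then have "m dvd j * d" by simp
    ultimately show False using h by blast
  qed
next
  assume c: "coprime j m"
  show "\<forall>d. 0 < d \<longrightarrow> d < m \<longrightarrow> \<not> m dvd j * d"
  proof (intro allI impI)
    fix d assume "0 < d" "d < m"
    show "\<not> m dvd j * d"
    proof
      assume "m dvd j * d"
      then have "m dvd d" using c by (metis coprime_commute coprime_dvd_mult_right_iff)
      then show False using \<open>0 < d\<close> \<open>d < m\<close> by (simp add: nat_dvd_not_less)
    qed
  qed
qed

lemma cis_prim_iff: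
  assumes "0 < m"
  shows "cis (2 * pi * real j / real m) \<in> prim m \<longleftrightarrow> coprime j m"
proof -
  let ?w = "cis (2 * pi / real m)"
  have w: "?w \<in> prim m" by (rule omega_prim[OF assms])
  have z: "cis (2 * pi * real j / real m) = ?w ^ j" by (simp add: DeMoivre mult.commute)
  have "?w ^ j \<in> prim m \<longleftrightarrow> (\<forall>d. 0 < d \<longrightarrow> d < m \<longrightarrow> \<not> m dvd j * d)"
  proof -
    have "(?w ^ j) ^ d = 1 \<longleftrightarrow> m dvd j * d" for d
      by (simp add: power_mult[symmetric] prim_dvd_iff[OF w])
    then show ?thesis using assms by (simp add: prim_def)
  qed
  then show ?thesis using z coprime_char[OF assms] by simp
qed

lemma bij_cis_prim:
  assumes "0 < m"
  shows "bij_betw (\<lambda>j. cis (2 * pi * real j / real m)) {j. j < m \<and> coprime j m} (prim m)"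
proof -
  let ?f = "\<lambda>j. cis (2 * pi * real j / real m)"
  have b: "bij_betw ?f {..<m} {z. z ^ m = 1}" by (rule bij_betw_roots_unity[OF assms])
  have "inj_on ?f {j. j < m \<and> coprime j m}"
    using b by (auto simp: bij_betw_def intro: inj_on_subset)
  moreover have "?f ` {j. j < m \<and> coprime j m} = prim m"
  proof safe
    fix j assume "j < m" "coprime j m"
    then show "?f j \<in> prim m" using cis_prim_iff[OF assms] by blast
  next
    fix z assume zp: "z \<in> prim m"
    then have "z \<in> {z. z ^ m = 1}" by (simp add: prim_one)
    then obtain j where j: "j < m" "z = ?f j" using b by (auto simp: bij_betw_def)
    then have "coprime j m" using zp cis_prim_iff[OF assms] by simp
    then show "z \<in> ?f ` {j. j < m \<and> coprime j m}" using j by blast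
  qed
  ultimately show ?thesis by (simp add: bij_betw_def)
qed

definition Ccyc :: "nat \<Rightarrow> complex poly" where
  "Ccyc m = (\<Prod>z\<in>prim m. [:-z, 1:])"

lemma Ccyc_cis:
  assumes "0 < m"
  shows "(\<Prod>j\<in>{j. j < m \<and> coprime j m}. [:- cis (2 * pi * real j / real m), 1:]) = Ccyc m"
  unfolding Ccyc_def using prod.reindex_bij_betw[OF bij_cis_prim[OF assms], of "\<lambda>z. [:-z,1:]"] by simp



lemma order_lin: "order z [:-w, 1:] = (if z = w then 1 else (0::nat))"
proof (cases "z = w")
  case True then show ?thesis using order_power_n_n[of w 1] by simp
next
  case False
  then have "poly [:-w, 1:] z \<noteq> 0" by simp
  then show ?thesis using False by (simp add: order_0I)
qed

lemma prodlin_ne0: "(\<Prod>w\<in>S. [:-w, 1:]) \<noteq> (0::'a::idom poly)"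
proof (cases "finite S")
  case True then show ?thesis by (subst prod_zero_iff) auto
qed simp

lemma lin_ne0: "[:-w, 1:] \<noteq> (0::'a::idom poly)" by simp

lemma degree_xt: "0 < t \<Longrightarrow> degree (monom 1 t - 1 :: 'a::idom poly) = t"
proof -
  assume t: "0 < t"
  have "monom 1 t - 1 = monom 1 t + (-1 :: 'a poly)" by simp
  also have "degree \<dots> = degree (monom (1::'a) t)" by (rule degree_add_eq_left) (use t in \<open>simp add: degree_monom_eq\<close>)
  finally show ?thesis by (simp add: degree_monom_eq)
qed

lemma lead_xt: "0 < t \<Longrightarrow> lead_coeff (monom 1 t - 1 :: 'a::idom poly) = 1"
  by (simp add: degree_xt coeff_diff)

lemma order_prodlin:
  fixes z :: "'a::idom"
  assumes "finite S"
  shows "order z (\<Prod>w\<in>S. [:-w, 1:]) = (if z \<in> S then 1 else 0)"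
  using assms
proof (induct S rule: finite_induct)
  case empty then show ?case by simp
next
  case (insert a S)
  have "order z (\<Prod>w\<in>insert a S. [:-w, 1:]) = order z ([:-a,1:] * (\<Prod>w\<in>S. [:-w, 1:]))"
    using insert by (simp del: mult_pCons_left)
  also have "\<dots> = order z [:-a,1:] + order z (\<Prod>w\<in>S. [:-w, 1:])"
    by (rule order_mult) (metis mult_eq_0_iff prodlin_ne0 lin_ne0)
  finally show ?case using insert by (simp add: order_lin)
qed

lemma prodlin_dvd:
  fixes p :: "'a::idom poly"
  assumes "finite S" "\<And>w. w \<in> S \<Longrightarrow> poly p w = 0"
  shows "(\<Prod>w\<in>S. [:-w, 1:]) dvd p"
  using assms
proof (induct S rule: finite_induct)
  case empty then show ?case by simp
next
  case (insert a S)
  then obtain r where r: "p = (\<Prod>w\<in>S. [:-w, 1:]) * r" by auto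
  have "poly (\<Prod>w\<in>S. [:-w, 1:]) a \<noteq> 0"
    using insert by (simp add: poly_prod prod_zero_iff)
  moreover have "poly p a = 0" using insert by simp
  ultimately have "poly r a = 0" using r by simp
  then have "[:-a,1:] dvd r" by (simp add: poly_eq_0_iff_dvd)
  then have "[:-a,1:] * (\<Prod>w\<in>S. [:-w, 1:]) dvd r * (\<Prod>w\<in>S. [:-w, 1:])"
    by (rule mult_dvd_mono) simp
  then show ?case using r prod.insert[OF insert(1,2), of "\<lambda>w. [:-w, 1:]"] by (metis mult.commute)
qed

lemma xt_prod:
  assumes "0 < t"
  shows "(monom 1 t - 1 :: complex poly) = (\<Prod>z\<in>{z. z ^ t = 1}. [:-z, 1:])"
proof -
  let ?P = "\<Prod>z\<in>{z::complex. z ^ t = 1}. [:-z, 1:]"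
  let ?X = "monom 1 t - 1 :: complex poly"
  have fin: "finite {z::complex. z ^ t = 1}" using assms by (intro finite_roots_unity) auto
  have "?P dvd ?X"
    by (rule prodlin_dvd[OF fin]) (simp add: poly_monom)
  then obtain r where r: "?X = ?P * r" by auto
  have dX: "degree ?X = t" using assms by (rule degree_xt)
  have X0: "?X \<noteq> 0" using dX assms by auto
  have dP: "degree ?P = t"
    by (simp add: degree_prod_eq_sum_degree card_roots_unity_eq[OF assms])
  have r0: "r \<noteq> 0" using r X0 by auto
  have "degree ?X = degree ?P + degree r" unfolding r by (rule degree_mult_eq[OF prodlin_ne0 r0])
  then have "degree r = 0" using dX dP by simp
  then obtain c where c: "r = [:c:]" by (metis degree_eq_zeroE)
  have "lead_coeff ?X = 1" using assms by (rule lead_xt)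
  moreover have "lead_coeff ?P = 1" by (simp add: lead_coeff_prod)
  ultimately have "c = 1" using r c by (cases "c = 0") (auto simp: lead_coeff_mult)
  then show ?thesis using r c by simp
qed

lemma Ccyc_ne0: "Ccyc m \<noteq> 0" by (simp add: Ccyc_def prodlin_ne0)

lemma lead_Ccyc: "lead_coeff (Ccyc m) = 1" by (simp add: Ccyc_def lead_coeff_prod)

lemma order_Ccyc: "order z (Ccyc m) = (if z \<in> prim m then 1 else 0)"
  unfolding Ccyc_def by (rule order_prodlin[OF finite_prim])

lemma xt_cyc:
  assumes "0 < t"
  shows "(monom 1 t - 1 :: complex poly) = (\<Prod>d\<in>{d. d dvd t}. Ccyc d)"
proof -
  have fin: "finite {d. d dvd t}" using assms by simp
  have disj: "\<forall>i\<in>{d. d dvd t}. \<forall>j\<in>{d. d dvd t}. i \<noteq> j \<longrightarrow> prim i \<inter> prim j = {}"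
    using prim_unique by blast
  have "(monom 1 t - 1 :: complex poly) = (\<Prod>z\<in>(\<Union>d\<in>{d. d dvd t}. prim d). [:-z, 1:])"
    using xt_prod[OF assms] roots_unity_Union[OF assms] by simp
  also have "\<dots> = (\<Prod>d\<in>{d. d dvd t}. \<Prod>z\<in>prim d. [:-z, 1:])"
    by (rule prod.UNION_disjoint[OF fin _ disj]) (simp add: finite_prim)
  finally show ?thesis by (simp add: Ccyc_def)
qed

lemma order_xt:
  assumes "0 < t"
  shows "order z (monom 1 t - 1 :: complex poly) = (if z ^ t = 1 then 1 else 0)"
  using xt_prod[OF assms] order_prodlin[of "{z. z ^ t = 1}" z] assms
  by (simp add: finite_roots_unity)



lemma monic_dvd:
  fixes Q A :: "int poly"
  assumes Q: "lead_coeff Q = 1" and d: "phi Q dvd phi A"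
  shows "Q dvd A"
proof -
  have Q0: "Q \<noteq> 0" using Q by auto
  obtain q r where pd: "pseudo_divmod A Q = (q, r)" by (cases "pseudo_divmod A Q") auto
  have A: "A = Q * q + r" using pseudo_divmod(1)[OF Q0 pd] Q by simp
  have rd: "r = 0 \<or> degree r < degree Q" using pseudo_divmod(2)[OF Q0 pd] .
  obtain S where S: "phi A = phi Q * S" using d by auto
  have "phi r = phi Q * (S - phi q)"
    using S A by (simp add: phi_add phi_mult algebra_simps)
  have "r = 0"
  proof (rule ccontr)
    assume r0: "r \<noteq> 0"
    then have "S - phi q \<noteq> 0" using \<open>phi r = _\<close> by auto
    then have "degree (phi r) = degree Q + degree (S - phi q)"
      using \<open>phi r = _\<close> Q0 by (simp add: degree_mult_eq)
    then show False using rd r0 by simp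
  qed
  then show ?thesis using A by simp
qed

lemma phi_xt: "phi (monom 1 t - 1) = monom 1 t - 1"
  by (simp add: phi_diff phi_monom)

lemma cyclo_ex:
  "0 < m \<Longrightarrow> \<exists>p. phi p = Ccyc m \<and> lead_coeff p = 1"
proof (induct m rule: less_induct)
  case (less m)
  define D where "D = {d. d dvd m \<and> d \<noteq> m}"
  have Dlt: "\<And>d. d \<in> D \<Longrightarrow> 0 < d \<and> d < m"
    using less(2) by (auto simp: D_def dest: dvd_imp_le intro: Nat.gr0I)
  have "\<forall>d\<in>D. \<exists>p. phi p = Ccyc d \<and> lead_coeff p = 1"
    using less(1) Dlt by blast
  then obtain psi where psi: "\<And>d. d \<in> D \<Longrightarrow> phi (psi d) = Ccyc d \<and> lead_coeff (psi d) = 1"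
    by metis
  define Q where "Q = (\<Prod>d\<in>D. psi d)"
  have finD: "finite D" using less(2) by (simp add: D_def)
  have phiQ: "phi Q = (\<Prod>d\<in>D. Ccyc d)" using psi by (simp add: Q_def phi_prod)
  have lQ: "lead_coeff Q = 1" using psi by (simp add: Q_def lead_coeff_prod)
  have "{d. d dvd m} = insert m D" by (auto simp: D_def)
  then have xt: "(monom 1 m - 1 :: complex poly) = Ccyc m * phi Q"
    using xt_cyc[OF less(2)] finD phiQ by (simp add: D_def)
  then have "phi Q dvd phi (monom 1 m - 1)" by (simp add: phi_xt)
  then obtain R where R: "monom 1 m - 1 = Q * R" using monic_dvd[OF lQ] by blast
  then have "phi Q * phi R = phi Q * Ccyc m" using xt by (metis phi_mult phi_xt mult.commute)
  moreover have "phi Q \<noteq> 0" using lQ by auto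
  ultimately have "phi R = Ccyc m" by simp
  moreover have "lead_coeff R = 1"
    using lead_phi[of R] \<open>phi R = Ccyc m\<close> lead_Ccyc[of m] by simp
  ultimately show ?case by blast
qed

lemma phi_cyclo: assumes "0 < m" shows "phi (cyclo m) = Ccyc m"
proof -
  obtain p where p: "phi p = Ccyc m" using cyclo_ex[OF assms] by blast
  have "phi (cyclo m) = (\<Prod>j\<in>{j. j < m \<and> coprime j m}. [:- cis (2 * pi * real j / real m), 1:])"
    unfolding cyclo_def
  proof (rule theI[of _ p])
    show "phi p = (\<Prod>j\<in>{j. j < m \<and> coprime j m}. [:- cis (2 * pi * real j / real m), 1:])"
      using p Ccyc_cis[OF assms] by simp
  next
    fix x assume "phi x = (\<Prod>j\<in>{j. j < m \<and> coprime j m}. [:- cis (2 * pi * real j / real m), 1:])"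
    then show "x = p" using p Ccyc_cis[OF assms] by (intro phi_inj) simp
  qed
  then show ?thesis using Ccyc_cis[OF assms] by simp
qed

lemma lead_cyclo: "0 < m \<Longrightarrow> lead_coeff (cyclo m) = 1"
  using phi_cyclo[of m] lead_phi[of "cyclo m"] lead_Ccyc[of m] by simp

lemma order_cyclo: "0 < m \<Longrightarrow> order z (phi (cyclo m)) = (if z \<in> prim m then 1 else 0)"
  by (simp add: phi_cyclo order_Ccyc)



lemma order_prod:
  fixes f :: "'b \<Rightarrow> 'a::idom poly"
  assumes "finite A" "\<And>a. a \<in> A \<Longrightarrow> f a \<noteq> 0"
  shows "order z (\<Prod>a\<in>A. f a) = (\<Sum>a\<in>A. order z (f a))"
  using assms
proof (induct A rule: finite_induct)
  case (insert x A)
  have "(\<Prod>a\<in>A. f a) \<noteq> 0" using insert by (simp add: prod_zero_iff)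
  moreover have "f x \<noteq> 0" using insert by simp
  ultimately show ?case using insert by (simp add: order_mult)
qed simp

lemma order_power:
  fixes p :: "'a::idom poly"
  assumes "p \<noteq> 0" shows "order z (p ^ n) = n * order z p"
  using assms by (induct n) (simp_all add: order_mult)

lemma qb_ne0: "0 < t \<Longrightarrow> qb t \<noteq> 0"
  using degree_xt[of t, where 'a=int] by (auto simp: qb_def)

lemma phi_qb: "phi (qb t) = monom 1 t - 1" by (simp add: qb_def phi_xt)

lemma order_qb: "0 < t \<Longrightarrow> order z (phi (qb t)) = (if z ^ t = 1 then 1 else 0)"
  by (simp add: phi_qb order_xt)

lemma hlki_prod:
  "hlki l k i = (\<Prod>j<k-i. qb (l - i - j)) * (\<Prod>j<i. qb (i - j))"
  by (simp add: hlki_def qfall_def qfact_def)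

lemma hlki_ne0:
  assumes "i \<le> k" "k \<le> l" shows "hlki l k i \<noteq> 0"
  unfolding hlki_prod using assms by (auto simp: prod_zero_iff qb_ne0 dest: qb_ne0[of 0])

lemma order_hlki:
  assumes "i \<le> k" "k \<le> l"
  shows "order z (phi (hlki l k i)) =
     (\<Sum>j<k-i. if z ^ (l - i - j) = 1 then 1 else 0) + (\<Sum>j<i. if z ^ (i - j) = 1 then 1 else 0)"
proof -
  have n1: "\<And>j. j \<in> {..<k-i} \<Longrightarrow> phi (qb (l - i - j)) \<noteq> 0" using assms by (auto simp: qb_ne0)
  have n2: "\<And>j. j \<in> {..<i} \<Longrightarrow> phi (qb (i - j)) \<noteq> 0" by (auto simp: qb_ne0)
  have "phi (hlki l k i) = (\<Prod>j<k-i. phi (qb (l - i - j))) * (\<Prod>j<i. phi (qb (i - j)))"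
    by (simp add: hlki_prod phi_mult phi_prod)
  moreover have "(\<Prod>j<k-i. phi (qb (l - i - j))) \<noteq> 0" "(\<Prod>j<i. phi (qb (i - j))) \<noteq> 0"
    using n1 n2 by (simp_all add: prod_zero_iff)
  ultimately have "order z (phi (hlki l k i)) =
     order z (\<Prod>j<k-i. phi (qb (l - i - j))) + order z (\<Prod>j<i. phi (qb (i - j)))"
    by (simp add: order_mult)
  also have "\<dots> = (\<Sum>j<k-i. order z (phi (qb (l - i - j)))) + (\<Sum>j<i. order z (phi (qb (i - j))))"
    using order_prod[of "{..<k-i}" "\<lambda>j. phi (qb (l - i - j))" z, OF finite_lessThan n1]
      order_prod[of "{..<i}" "\<lambda>j. phi (qb (i - j))" z, OF finite_lessThan n2]
    by (rule arg_cong2[where f="(+)"])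
  also have "\<dots> = (\<Sum>j<k-i. if z ^ (l - i - j) = 1 then 1 else 0) + (\<Sum>j<i. if z ^ (i - j) = 1 then 1 else 0)"
    using assms by (intro arg_cong2[where f="(+)"] sum.cong refl) (simp_all add: order_qb)
  finally show ?thesis .
qed

lemma div_step: "0 < x \<Longrightarrow> x div m = (x - 1) div m + (if m dvd x then 1 else (0::nat))"
proof -
  assume "0 < x"
  then obtain y where y: "x = Suc y" by (cases x) auto
  show ?thesis unfolding y by (simp add: div_Suc dvd_eq_mod_eq_0 mod_Suc)
qed

lemma count_mult:
  fixes m :: nat
  shows "n \<le> a \<Longrightarrow> (\<Sum>j<n. if m dvd (a - j) then 1 else 0) = a div m - (a - n) div m"
proof (induct n)
  case 0 then show ?case by simp
next
  case (Suc n)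
  have "(a - n) div m = (a - Suc n) div m + (if m dvd (a - n) then 1 else 0)"
    using div_step[of "a - n" m] Suc(2) by simp
  moreover have "(a - n) div m \<le> a div m" by (simp add: div_le_mono)
  ultimately show ?case using Suc by simp
qed



definition cnt :: "nat \<Rightarrow> nat \<Rightarrow> nat \<Rightarrow> nat \<Rightarrow> nat" where
  "cnt l k m i = ((l - i) div m - (l - k) div m) + i div m"

definition Fm :: "nat \<Rightarrow> nat \<Rightarrow> nat \<Rightarrow> nat" where
  "Fm l k m = (if m \<le> k then (l + 1) div m - 1 - (l - k) div m else 0)"

lemma order_h_prim:
  assumes z: "z \<in> prim m" and "i \<le> k" "k \<le> l"
  shows "order z (phi (hlki l k i)) = cnt l k m i"
proof -
  have "order z (phi (hlki l k i)) =
     (\<Sum>j<k-i. if m dvd (l - i - j) then 1 else 0) + (\<Sum>j<i. if m dvd (i - j) then 1 else 0)"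
    unfolding order_hlki[OF assms(2,3)] by (simp add: prim_dvd_iff[OF z])
  also have "(\<Sum>j<k-i. if m dvd (l - i - j) then 1 else 0) = (l - i) div m - (l - i - (k - i)) div m"
    using assms by (intro count_mult) simp
  also have "(\<Sum>j<i. if m dvd (i - j) then 1 else 0) = i div m - (i - i) div m"
    by (intro count_mult) simp
  also have "l - i - (k - i) = l - k" using assms by simp
  finally show ?thesis by (simp add: cnt_def)
qed

lemma order_h_noroot:
  assumes z: "\<And>t. 0 < t \<Longrightarrow> z ^ t \<noteq> 1" and "i \<le> k" "k \<le> l"
  shows "order z (phi (hlki l k i)) = 0"
  unfolding order_hlki[OF assms(2,3)] using assms by (auto intro!: sum.neutral)

lemma key_div:
  fixes x y m :: nat assumes "0 < m"
  shows "(x + y + 1) div m \<le> x div m + y div m + 1"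
proof -
  have "x < m * (x div m + 1)"
  proof -
    have "m * (x div m) + x mod m = x" by (rule mult_div_mod_eq)
    then show ?thesis using mod_less_divisor[OF assms, of x] unfolding distrib_left mult_1_right by linarith
  qed
  moreover have "y < m * (y div m + 1)"
  proof -
    have "m * (y div m) + y mod m = y" by (rule mult_div_mod_eq)
    then show ?thesis using mod_less_divisor[OF assms, of y] unfolding distrib_left mult_1_right by linarith
  qed
  ultimately have "x + y + 1 < m * (x div m + y div m + 2)" by (simp add: algebra_simps)
  then have "(x + y + 1) div m < x div m + y div m + 2"
    using assms by (simp add: div_less_iff_less_mult mult.commute)
  then show ?thesis by simp
qed

lemma F_le_cnt:
  assumes "0 < m" "i \<le> k" "k \<le> l"
  shows "Fm l k m \<le> cnt l k m i"
proof (cases "m \<le> k")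
  case True
  have "(l - i + i + 1) div m \<le> (l - i) div m + i div m + 1" by (rule key_div[OF assms(1)])
  then have "(l + 1) div m \<le> (l - i) div m + i div m + 1" using assms by simp
  moreover have "(l - k) div m \<le> (l - i) div m" using assms by (simp add: div_le_mono)
  ultimately show ?thesis using True by (simp add: Fm_def cnt_def)
qed (simp add: Fm_def)

lemma F_attained:
  assumes "0 < m" "k \<le> l"
  shows "\<exists>i\<le>k. cnt l k m i = Fm l k m"
proof (cases "m \<le> k")
  case True
  have a: "(l + 1 - m) div m = (l + 1) div m - 1"
    using True assms by (simp add: le_div_geq)
  have b: "l - (m - 1) = l + 1 - m" using True assms by simp
  have c: "(m - 1) div m = 0" using assms by simp
  show ?thesis
    by (rule exI[of _ "m - 1"]) (use True a b c in \<open>simp add: Fm_def cnt_def\<close>)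
next
  case False
  then show ?thesis using assms by (intro exI[of _ k]) (simp add: Fm_def cnt_def)
qed

lemma Fm_int:
  assumes "0 < m" "k \<le> l"
  shows "int (Fm l k m) = (if m \<le> k
              then \<lfloor>real (l + 1) / real m\<rfloor> - 1 - \<lfloor>real (l - k) / real m\<rfloor>
              else 0)"
proof (cases "m \<le> k")
  case True
  have "(l - k) div m + 1 = (l - k + m) div m" using assms by (subst div_add_self2) auto
  also have "\<dots> \<le> (l + 1) div m" using True assms by (intro div_le_mono) simp
  finally have le: "(l - k) div m + 1 \<le> (l + 1) div m" .
  have f1: "\<lfloor>real (l + 1) / real m\<rfloor> = int ((l + 1) div m)"
    by (rule floor_divide_of_nat_eq)
  have f2: "\<lfloor>real (l - k) / real m\<rfloor> = int ((l - k) div m)"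
    by (rule floor_divide_of_nat_eq)
  show ?thesis using True le f1 f2 by (simp add: Fm_def of_nat_diff)
qed (simp add: Fm_def)



definition PP :: "nat \<Rightarrow> nat \<Rightarrow> int poly" where
  "PP l k = (\<Prod>m\<in>{1..l}. cyclo m ^ Fm l k m)"

lemma lead_PP: "lead_coeff (PP l k) = 1"
  by (simp add: PP_def lead_coeff_prod lead_coeff_power lead_cyclo)

lemma PP_ne0: "PP l k \<noteq> 0" using lead_PP[of l k] by auto

lemma order_PP_gen:
  "order z (phi (PP l k)) = (\<Sum>m\<in>{1..l}. Fm l k m * (if z \<in> prim m then 1 else 0))"
proof -
  have ne: "\<And>m. m \<in> {1..l} \<Longrightarrow> phi (cyclo m) ^ Fm l k m \<noteq> 0"
  proof -
    fix m assume "m \<in> {1..l}"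
    then have "0 < m" by simp
    then have "lead_coeff (cyclo m) = 1" by (rule lead_cyclo)
    then have "cyclo m \<noteq> 0" by auto
    then show "phi (cyclo m) ^ Fm l k m \<noteq> 0" by simp
  qed
  have "order z (phi (PP l k)) = order z (\<Prod>m\<in>{1..l}. phi (cyclo m) ^ Fm l k m)"
    by (simp add: PP_def phi_prod phi_power)
  also have "\<dots> = (\<Sum>m\<in>{1..l}. order z (phi (cyclo m) ^ Fm l k m))"
    by (rule order_prod[OF finite_atLeastAtMost ne])
  also have "\<dots> = (\<Sum>m\<in>{1..l}. Fm l k m * (if z \<in> prim m then 1 else 0))"
  proof (rule sum.cong[OF refl])
    fix m assume m: "m \<in> {1..l}"
    then have "0 < m" by simp
    then have "phi (cyclo m) \<noteq> 0" using lead_cyclo[of m] by auto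
    then show "order z (phi (cyclo m) ^ Fm l k m) = Fm l k m * (if z \<in> prim m then 1 else 0)"
      using order_power[OF \<open>phi (cyclo m) \<noteq> 0\<close>, of z "Fm l k m"] order_cyclo[OF \<open>0 < m\<close>, of z] by simp
  qed
  finally show ?thesis .
qed

lemma order_PP_prim:
  assumes z: "z \<in> prim m0" and kl: "k \<le> l"
  shows "order z (phi (PP l k)) = Fm l k m0"
proof -
  have "(\<Sum>m\<in>{1..l}. Fm l k m * (if z \<in> prim m then 1 else 0)) =
        (\<Sum>m\<in>{1..l}. if m = m0 then Fm l k m else 0)"
  proof -
    have iff: "\<And>m. z \<in> prim m \<longleftrightarrow> m = m0" using prim_unique[OF z] z by blast
    show ?thesis by (simp only: iff) (intro sum.cong refl, simp)
  qed
  also have "\<dots> = (if m0 \<in> {1..l} then Fm l k m0 else 0)" by (rule sum.delta) simp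
  also have "\<dots> = Fm l k m0"
  proof (cases "m0 \<in> {1..l}")
    case False
    then have "\<not> m0 \<le> k" using prim_pos[OF z] kl by auto
    then show ?thesis using False by (simp add: Fm_def)
  qed simp
  finally show ?thesis by (simp add: order_PP_gen)
qed

lemma order_PP_noroot:
  assumes z: "\<And>t. 0 < t \<Longrightarrow> z ^ t \<noteq> 1"
  shows "order z (phi (PP l k)) = 0"
proof -
  have "\<And>m. z \<notin> prim m"
  proof
    fix m assume "z \<in> prim m"
    then have "z ^ m = 1" "0 < m" by (simp_all add: prim_one prim_pos)
    then show False using z by blast
  qed
  then show ?thesis by (simp add: order_PP_gen)
qed

lemma prim_or_noroot: "(\<exists>m. z \<in> prim m) \<or> (\<forall>t. 0 < t \<longrightarrow> z ^ t \<noteq> 1)"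
  using prim_exists by blast



lemma prodpow_dvd:
  fixes q :: "complex poly"
  assumes "finite S" "q \<noteq> 0" "\<And>z. z \<in> S \<Longrightarrow> e z \<le> order z q"
  shows "(\<Prod>z\<in>S. [:-z, 1:] ^ e z) dvd q"
  using assms
proof (induct S rule: finite_induct)
  case empty then show ?case by simp
next
  case (insert a S)
  then obtain r where r: "q = (\<Prod>z\<in>S. [:-z, 1:] ^ e z) * r" by auto
  have ne: "(\<Prod>z\<in>S. [:-z, 1:] ^ e z) \<noteq> 0" by (simp add: prod_zero_iff insert)
  have r0: "r \<noteq> 0" using r insert by auto
  have "order a (\<Prod>z\<in>S. [:-z, 1:] ^ e z) = 0"
    using insert by (intro order_0I) (simp add: poly_prod prod_zero_iff)
  then have "order a q = order a r" using r ne r0 by (simp add: order_mult)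
  moreover have "e a \<le> order a q" using insert(5) by simp
  ultimately have "[:-a, 1:] ^ e a dvd r" by (simp add: order_divides)
  then have "[:-a, 1:] ^ e a * (\<Prod>z\<in>S. [:-z, 1:] ^ e z) dvd r * (\<Prod>z\<in>S. [:-z, 1:] ^ e z)"
    by (rule mult_dvd_mono) simp
  moreover have q': "q = r * (\<Prod>z\<in>S. [:-z, 1:] ^ e z)" using r by (simp only: mult.commute)
  ultimately show ?case by (subst q', subst prod.insert[OF insert(1,2)])
qed

lemma order_le_dvd:
  fixes p q :: "complex poly"
  assumes "p \<noteq> 0" "q \<noteq> 0" "\<And>z. order z p \<le> order z q"
  shows "p dvd q"
proof -
  have fin: "finite {z. poly p z = 0}" using assms(1) by (rule poly_roots_finite)
  have "(\<Prod>z | poly p z = 0. [:-z, 1:] ^ order z p) dvd q"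
    by (rule prodpow_dvd[OF fin assms(2)]) (use assms(3) in auto)
  then have "smult (lead_coeff p) (\<Prod>z | poly p z = 0. [:-z, 1:] ^ order z p) dvd q"
    using assms(1) by (simp add: smult_dvd_iff)
  then show ?thesis by (simp add: complex_poly_decompose)
qed

lemma same_orders:
  fixes p q :: "complex poly"
  assumes "p \<noteq> 0" "q \<noteq> 0" "\<And>z. order z p = order z q"
  shows "smult (lead_coeff q) p = smult (lead_coeff p) q"
proof -
  have R: "{z. poly p z = 0} = {z. poly q z = 0}" using assms by (auto simp: order_root)
  have "smult (lead_coeff q) p = smult (lead_coeff q) (smult (lead_coeff p) (\<Prod>z | poly p z = 0. [:-z, 1:] ^ order z p))"
    by (simp add: complex_poly_decompose)
  also have "(\<Prod>z | poly p z = 0. [:-z, 1:] ^ order z p) = (\<Prod>z | poly q z = 0. [:-z, 1:] ^ order z q)"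
    by (simp only: R assms(3))
  also have "smult (lead_coeff q) (smult (lead_coeff p) \<dots>) = smult (lead_coeff p) (smult (lead_coeff q) \<dots>)"
    by (simp add: mult.commute)
  also have "smult (lead_coeff q) (\<Prod>z | poly q z = 0. [:-z, 1:] ^ order z q) = q"
    by (rule complex_poly_decompose)
  finally show ?thesis .
qed

lemma order_monom_nz: "z \<noteq> 0 \<Longrightarrow> order z (monom (1::complex) b) = 0"
  by (intro order_0I) (simp add: poly_monom)



lemma poly_h0:
  assumes "k \<le> l" shows "poly (hlki l k 0) 0 = (-1) ^ k"
proof -
  have "\<And>j. j \<in> {..<k} \<Longrightarrow> poly (qb (l - j)) 0 = -1"
    using assms by (simp add: qb_def poly_monom power_0_left)
  then have "(\<Prod>j<k. poly (qb (l - j)) 0) = (\<Prod>j<k. (-1::int))" by (rule prod.cong[OF refl])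
  then show ?thesis by (simp add: hlki_prod poly_prod)
qed

lemma order_phi_monom_mult:
  assumes "z \<noteq> 0" "a \<noteq> 0"
  shows "order z (phi (monom 1 b * a)) = order z (phi a)"
proof -
  have "phi (monom 1 b * a) = monom 1 b * phi a" by (simp add: phi_mult phi_monom)
  moreover have "monom (1::complex) b \<noteq> 0" by simp
  moreover have "phi a \<noteq> 0" using assms by simp
  ultimately show ?thesis using assms by (simp add: order_mult order_monom_nz)
qed

lemma ldvd_order:
  assumes "ldvd a b" "b \<noteq> 0" "z \<noteq> 0"
  shows "order z (phi a) \<le> order z (phi b)"
proof -
  obtain j where j: "a dvd monom 1 j * b" using assms(1) by (auto simp: ldvd_def)
  then have "phi a dvd phi (monom 1 j * b)" by (metis dvd_def phi_mult)
  moreover have "monom 1 j * b \<noteq> 0" using assms by simp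
  ultimately have "order z (phi a) \<le> order z (phi (monom 1 j * b))"
    by (intro dvd_imp_order_le) auto
  then show ?thesis using order_phi_monom_mult[OF assms(3,2)] by simp
qed

theorem lemma4p1:
  fixes l k :: nat and g :: "int poly"
  assumes kl: "k \<le> l"
    and G: "is_lgcd g (hlki l k ` {0..k})"
  shows "(\<forall>m::nat. 1 \<le> m \<longrightarrow>
           int (dm m g) = (if m \<le> k
              then \<lfloor>real (l + 1) / real m\<rfloor> - 1 - \<lfloor>real (l - k) / real m\<rfloor>
              else 0))
    \<and> (\<exists>(u::int) (j::nat). (u = 1 \<or> u = -1) \<and>
           g = smult u (monom 1 j) * (\<Prod>m\<in>{m. 1 \<le> m \<and> dm m g \<noteq> 0}. cyclo m ^ dm m g))"
proof -
  define P where "P = PP l k"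
  have hne: "\<And>i. i \<le> k \<Longrightarrow> hlki l k i \<noteq> 0" using kl hlki_ne0 by blast
  have gdiv: "\<And>i. i \<le> k \<Longrightarrow> ldvd g (hlki l k i)" using G by (auto simp: is_lgcd_def)
  have Pdvd: "\<And>i. i \<le> k \<Longrightarrow> P dvd hlki l k i"
  proof -
    fix i assume i: "i \<le> k"
    have "phi P dvd phi (hlki l k i)"
    proof (rule order_le_dvd)
      show "phi P \<noteq> 0" by (simp add: P_def PP_ne0)
      show "phi (hlki l k i) \<noteq> 0" using hne[OF i] by simp
      fix z
      show "order z (phi P) \<le> order z (phi (hlki l k i))"
      proof (cases "\<exists>m. z \<in> prim m")
        case True
        then obtain m where z: "z \<in> prim m" by blast
        show ?thesis unfolding P_def order_PP_prim[OF z kl] order_h_prim[OF z i kl]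
          by (rule F_le_cnt[OF prim_pos[OF z] i kl])
      next
        case False
        then have "\<forall>t. 0 < t \<longrightarrow> z ^ t \<noteq> 1" using prim_or_noroot by blast
        then show ?thesis unfolding P_def by (simp add: order_PP_noroot)
      qed
    qed
    then show "P dvd hlki l k i" by (rule monic_dvd[OF lead_PP[of l k, folded P_def]])
  qed
  have "\<forall>h\<in>hlki l k ` {0..k}. ldvd P h"
    using Pdvd unfolding ldvd_def by (metis atLeastAtMost_iff imageE monom_0 mult_1 one_pCons)
  then have "ldvd P g" using G by (simp add: is_lgcd_def)
  then obtain a where a: "P dvd monom 1 a * g" by (auto simp: ldvd_def)
  have g0: "g \<noteq> 0"
  proof
    assume "g = 0"
    then obtain j where "0 dvd monom 1 j * hlki l k 0" using gdiv[of 0] by (auto simp: ldvd_def)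
    then show False using hne[of 0] by simp
  qed
  have Pne: "P \<noteq> 0" by (simp add: P_def PP_ne0)
  have ordg: "\<And>z. z \<noteq> 0 \<Longrightarrow> order z (phi g) = order z (phi P)"
  proof -
    fix z :: complex assume z0: "z \<noteq> 0"
    have ge: "order z (phi P) \<le> order z (phi g)"
      using ldvd_order[OF \<open>ldvd P g\<close> g0 z0] .
    have le: "order z (phi g) \<le> order z (phi P)"
    proof (cases "\<exists>m. z \<in> prim m")
      case True
      then obtain m where z: "z \<in> prim m" by blast
      obtain i where i: "i \<le> k" "cnt l k m i = Fm l k m" using F_attained[OF prim_pos[OF z] kl] by blast
      have "order z (phi g) \<le> order z (phi (hlki l k i))"
        using ldvd_order[OF gdiv[OF i(1)] hne[OF i(1)] z0] .
      also have "\<dots> = order z (phi P)"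
        unfolding P_def order_PP_prim[OF z kl] order_h_prim[OF z i(1) kl] by (rule i(2))
      finally show ?thesis .
    next
      case False
      then have nr: "\<forall>t. 0 < t \<longrightarrow> z ^ t \<noteq> 1" using prim_or_noroot by blast
      have "order z (phi g) \<le> order z (phi (hlki l k 0))"
        using ldvd_order[OF gdiv hne z0] by simp
      also have "\<dots> = 0" using order_h_noroot[of z 0 k l] nr kl by simp
      finally show ?thesis by simp
    qed
    show "order z (phi g) = order z (phi P)" using le ge by simp
  qed
  have P00: "order 0 (phi P) = 0" unfolding P_def by (rule order_PP_noroot) (simp add: power_0_left)
  define j0 where "j0 = order 0 (phi g)"
  define c where "c = lead_coeff g"
  have "\<And>z. order z (phi g) = order z (monom 1 j0 * phi P)"
  proof -
    fix z :: complex
    have "order z (monom 1 j0 * phi P) = order z (monom 1 j0) + order z (phi P)"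
      by (rule order_mult) (simp add: Pne)
    then show "order z (phi g) = order z (monom 1 j0 * phi P)"
      using ordg[of z] P00 by (cases "z = 0") (simp_all add: j0_def order_monom_nz)
  qed
  then have "smult (lead_coeff (monom 1 j0 * phi P)) (phi g) = smult (lead_coeff (phi g)) (monom 1 j0 * phi P)"
    by (intro same_orders) (simp_all add: g0 Pne)
  moreover have "lead_coeff (monom (1::complex) j0 * phi P) = 1"
    using lead_PP[of l k] by (simp add: P_def lead_coeff_mult degree_monom_eq coeff_map_poly)
  ultimately have "phi g = smult (of_int c) (monom 1 j0 * phi P)" by (simp add: c_def coeff_map_poly)
  also have "\<dots> = phi (smult c (monom 1 j0 * P))" by (simp add: phi_smult phi_mult phi_monom)
  finally have gP: "g = smult c (monom 1 j0 * P)" by (rule phi_inj)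
  have cu: "c = 1 \<or> c = -1"
  proof -
    obtain b where "g dvd monom 1 b * hlki l k 0" using gdiv[of 0] by (auto simp: ldvd_def)
    then obtain w where w: "monom 1 b * hlki l k 0 = g * w" by auto
    have "coeff (monom 1 b * hlki l k 0) b = coeff (hlki l k 0) 0" by (simp add: coeff_monom_mult)
    also have "\<dots> = (-1) ^ k" using poly_h0[OF kl] by (simp add: poly_0_coeff_0)
    finally have "coeff (g * w) b = (-1) ^ k" using w by simp
    moreover have "coeff (g * w) b = c * coeff (monom 1 j0 * P * w) b" by (simp add: gP)
    ultimately have "c dvd (-1) ^ k" by (metis dvd_triv_left)
    moreover have "((-1::int) ^ k) * ((-1) ^ k) = 1" by (simp flip: power_mult_distrib)
    then have "(-1::int) ^ k dvd 1" by (metis dvdI)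
    ultimately have "c dvd 1" by (rule dvd_trans)
    then have "\<bar>c\<bar> = 1" by simp
    then show ?thesis by (auto simp: abs_if split: if_splits)
  qed
  have dmF: "\<And>m. 1 \<le> m \<Longrightarrow> dm m g = Fm l k m"
  proof -
    fix m :: nat assume m1: "1 \<le> m"
    then have m0: "0 < m" by simp
    show "dm m g = Fm l k m" unfolding dm_def
    proof (rule Greatest_equality)
      have "cyclo m ^ Fm l k m dvd P"
      proof (cases "Fm l k m = 0")
        case False
        then have "m \<in> {1..l}" using m1 kl by (auto simp: Fm_def split: if_splits)
        then show ?thesis unfolding P_def PP_def by (intro dvd_prodI) simp_all
      qed simp
      also have "P dvd g" unfolding gP by (simp add: dvd_smult)
      finally show "ldvd (cyclo m ^ Fm l k m) g" unfolding ldvd_def by (intro exI[of _ 0]) simp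
    next
      fix y assume y: "ldvd (cyclo m ^ y) g"
      define \<zeta> where "\<zeta> = cis (2 * pi / real m)"
      have zp: "\<zeta> \<in> prim m" unfolding \<zeta>_def by (rule omega_prim[OF m0])
      have "order \<zeta> (phi (cyclo m ^ y)) \<le> order \<zeta> (phi g)"
        by (rule ldvd_order[OF y g0 prim_ne0[OF zp]])
      moreover have "order \<zeta> (phi (cyclo m ^ y)) = y"
      proof -
        have "phi (cyclo m) \<noteq> 0" using lead_cyclo[OF m0] by auto
        then show ?thesis using zp by (simp add: phi_power order_power order_cyclo[OF m0])
      qed
      moreover have "order \<zeta> (phi g) = Fm l k m"
        using ordg[OF prim_ne0[OF zp]] order_PP_prim[OF zp kl] by (simp add: P_def)
      ultimately show "y \<le> Fm l k m" by simp
    qed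
  qed
  show ?thesis
  proof
    show "\<forall>m::nat. 1 \<le> m \<longrightarrow> int (dm m g) = (if m \<le> k
              then \<lfloor>real (l + 1) / real m\<rfloor> - 1 - \<lfloor>real (l - k) / real m\<rfloor> else 0)"
      using dmF Fm_int kl by simp
  next
    have S: "{m. 1 \<le> m \<and> dm m g \<noteq> 0} = {m. 1 \<le> m \<and> Fm l k m \<noteq> 0}" using dmF by auto
    have "(\<Prod>m\<in>{m. 1 \<le> m \<and> dm m g \<noteq> 0}. cyclo m ^ dm m g) =
          (\<Prod>m\<in>{m. 1 \<le> m \<and> Fm l k m \<noteq> 0}. cyclo m ^ Fm l k m)"
      unfolding S using dmF by (intro prod.cong refl) simp
    also have "\<dots> = P" unfolding P_def PP_def
    proof (rule prod.mono_neutral_left)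
      show "{m. 1 \<le> m \<and> Fm l k m \<noteq> 0} \<subseteq> {1..l}" using kl by (auto simp: Fm_def split: if_splits)
    qed auto
    finally have "g = smult c (monom 1 j0) * (\<Prod>m\<in>{m. 1 \<le> m \<and> dm m g \<noteq> 0}. cyclo m ^ dm m g)"
      using gP by simp
    then show "\<exists>(u::int) (j::nat). (u = 1 \<or> u = -1) \<and>
           g = smult u (monom 1 j) * (\<Prod>m\<in>{m. 1 \<le> m \<and> dm m g \<noteq> 0}. cyclo m ^ dm m g)"
      using cu by blast
  qed
qed


end
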